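(* Let $R_1,R_2$ be nonaxisymmetric rigid components in $\mathbb{R}^3$ in generic position ($n_r^1,n_r^2>1$), and let $R_3$ be a rod ($n_r^3=1$) distinct from them. Suppose that $R_1$ and $R_2$ intersect in at least two instances, and let $\mathbf p_1,\mathbf p_2$ be points lying in two distinct instances of $R_1\cap R_2$. Suppose also that each of $R_1$ and $R_2$ intersects $R_3$ in exactly one instance, and let $\mathbf p_3\in R_1\cap R_3$ and $\mathbf p_4\in R_2\cap R_3$. Assume that neither $\mathbf p_3$ nor $\mathbf p_4$ is collinear with both $\mathbf p_1$ and $\mathbf p_2$. Then the composite body $R_1\cup R_2\cup R_3$ is rigid.
   Context: A rod is a straight segment in $\mathbb{R}^3$. A rigid component (rigid body) $R_i$ is a set of rods that moves as a single rigid body; $n_r^i$ denotes the number of rods it contains, and a component with $n_r^i=1$ is a rod. A component with $n_r^i>1$ is called nonaxisymmetric and may be planar or nonplanar. The intersection of two distinct components consists of finitely many connected pieces, called instances (contacts). Distinct components share no rod. Positions are generic apart from the stated incidences. A union of components is rigid if it is infinitesimally rigid in the following sense. An infinitesimal motion is admissible if its restriction to each component preserves, to first order, all distances between points of that component, and if points on a common rod remain collinear to first order. The union is rigid if every admissible infinitesimal motion is a Euclidean rigid motion of the whole union. Equivalently, the composite rigidity matrix has a right nullspace of dimension $6$. *)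

theory Defs
  imports "HOL-Analysis.Analysis" "HOL-Analysis.Cross3"
begin

type_synonym point = "real^3"

type_synonym rod = "point \<times> point"

definition is_rod :: "rod \<Rightarrow> bool" where
  "is_rod r \<longleftrightarrow> fst r \<noteq> snd r"

definition rod_points :: "rod \<Rightarrow> point set" where
  "rod_points r = closed_segment (fst r) (snd r)"

definition component :: "rod set \<Rightarrow> bool" where
  "component C \<longleftrightarrow> finite C \<and> C \<noteq> {} \<and> (\<forall>r\<in>C. is_rod r)"

definition comp_points :: "rod set \<Rightarrow> point set" where
  "comp_points C = (\<Union>r\<in>C. rod_points r)"

definition instances :: "rod set \<Rightarrow> rod set \<Rightarrow> point set set" where
  "instances A B =
     (let S = comp_points A \<inter> comp_points B in connected_component_set S ` S)"

definition inf_euclidean :: "(point \<Rightarrow> point) \<Rightarrow> bool" where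
  "inf_euclidean v \<longleftrightarrow> (\<exists>\<omega> t. \<forall>x. v x = cross3 \<omega> x + t)"

definition admissible_motion :: "rod set set \<Rightarrow> (point \<Rightarrow> point) \<Rightarrow> bool" where
  "admissible_motion Cs v \<longleftrightarrow>
     (\<forall>C\<in>Cs. \<exists>u. inf_euclidean u \<and> (\<forall>x\<in>comp_points C. v x = u x))"

definition rigid_union :: "rod set set \<Rightarrow> bool" where
  "rigid_union Cs \<longleftrightarrow>
     (\<forall>v. admissible_motion Cs v \<longrightarrow>
        (\<exists>u. inf_euclidean u \<and> (\<forall>x\<in>(\<Union>C\<in>Cs. comp_points C). v x = u x)))"

end

theory Submission
  imports Defs
begin

lemma ident: fixes a b c :: "real^3"
  shows "((cross3 a b) \<bullet> (cross3 a b)) *\<^sub>R c = ((cross3 c b) \<bullet> (cross3 a b)) *\<^sub>R a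
     + ((cross3 a c) \<bullet> (cross3 a b)) *\<^sub>R b + (c \<bullet> (cross3 a b)) *\<^sub>R (cross3 a b)"
  unfolding vec_eq_iff forall_3 cross3_def inner_vec_def sum_3
  by (simp add: vector_def algebra_simps)

lemma inst_sub: "I \<in> instances A B \<Longrightarrow> p \<in> I \<Longrightarrow> p \<in> comp_points A \<and> p \<in> comp_points B"
  unfolding instances_def Let_def using connected_component_subset by blast

lemma triple_nonzero:
  fixes p1 p2 p3 p4 :: point
  assumes ncol4: "\<not> collinear {p1, p2, p4}"
    and generic: "\<not> coplanar {p1, p2, p3, p4}"
  shows "cross3 (p2 - p1) (p4 - p1) \<bullet> (p4 - p3) \<noteq> 0"
proof
  assume h: "cross3 (p2 - p1) (p4 - p1) \<bullet> (p4 - p3) = 0"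
  define a where "a = p2 - p1"
  define b where "b = p4 - p1"
  define c where "c = p3 - p1"
  define n where "n = cross3 a b"
  have "p4 - p3 = b - c" unfolding b_def c_def by simp
  have "n \<bullet> (p4 - p3) = 0" using h unfolding n_def a_def b_def .
  hence "n \<bullet> (b - c) = 0" unfolding \<open>p4 - p3 = b - c\<close> .
  hence "n \<bullet> b - n \<bullet> c = 0" by (simp add: inner_diff_right)
  moreover have "n \<bullet> b = 0" unfolding n_def by (simp add: dot_cross_self)
  ultimately have nc: "c \<bullet> n = 0" by (simp add: inner_commute)
  have "n \<noteq> 0"
  proof
    assume "n = 0"
    hence "collinear {0, a, b}" unfolding n_def using cross_eq_0 by blast
    moreover have "collinear {p2, p1, p4} \<longleftrightarrow> collinear {0, p2 - p1, p4 - p1}"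
      by (rule collinear_3) (simp add: NO_MATCH_def)
    ultimately have "collinear {p2, p1, p4}" unfolding a_def b_def by simp
    thus False using ncol4 by (simp add: insert_commute)
  qed
  hence nn: "n \<bullet> n \<noteq> 0" by simp
  define al where "al = ((cross3 c b) \<bullet> n) / (n \<bullet> n)"
  define be where "be = ((cross3 a c) \<bullet> n) / (n \<bullet> n)"
  have "(n \<bullet> n) *\<^sub>R c = (n \<bullet> n) *\<^sub>R (al *\<^sub>R a + be *\<^sub>R b)"
    using ident[of a b c] nc nn unfolding n_def[symmetric] al_def be_def
    by (simp add: scaleR_add_right)
  hence ceq: "c = al *\<^sub>R a + be *\<^sub>R b" using nn by simp
  have "p3 = (1 - al - be) *\<^sub>R p1 + al *\<^sub>R p2 + be *\<^sub>R p4"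
    using ceq unfolding a_def b_def c_def by (simp add: algebra_simps)
  hence "p3 \<in> affine hull {p1, p2, p4}" unfolding affine_hull_3 mem_Collect_eq
    by (intro exI[of _ "1 - al - be"] exI[of _ al] exI[of _ be]) simp
  hence "{p1, p2, p3, p4} \<subseteq> affine hull {p1, p2, p4}"
    using hull_subset[of "{p1,p2,p4}" affine] by auto
  hence "coplanar {p1, p2, p3, p4}" unfolding coplanar_def by blast
  thus False using generic by simp
qed

theorem mainTheorem2:
  fixes R1 R2 R3 :: "rod set" and p1 p2 p3 p4 :: point
  assumes comps: "component R1" "component R2" "component R3"
    and nonaxi: "card R1 > 1" "card R2 > 1"
    and isrod: "card R3 = 1"
    and share_no_rod: "R1 \<inter> R2 = {}" "R1 \<inter> R3 = {}" "R2 \<inter> R3 = {}"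
    and two_inst: "I1 \<in> instances R1 R2" "I2 \<in> instances R1 R2" "I1 \<noteq> I2"
    and p1: "p1 \<in> I1" and p2: "p2 \<in> I2"
    and one13: "card (instances R1 R3) = 1"
    and one23: "card (instances R2 R3) = 1"
    and p3: "p3 \<in> comp_points R1 \<inter> comp_points R3"
    and p4: "p4 \<in> comp_points R2 \<inter> comp_points R3"
    and ncol3: "\<not> collinear {p1, p2, p3}"
    and ncol4: "\<not> collinear {p1, p2, p4}"
    and generic: "\<not> coplanar {p1, p2, p3, p4}"
  shows "rigid_union {R1, R2, R3}"
  unfolding rigid_union_def
proof (intro allI impI)
  fix v assume adm: "admissible_motion {R1, R2, R3} v"
  obtain u1 where u1: "inf_euclidean u1" "\<forall>x\<in>comp_points R1. v x = u1 x"
    using adm unfolding admissible_motion_def by blast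
  obtain u2 where u2: "inf_euclidean u2" "\<forall>x\<in>comp_points R2. v x = u2 x"
    using adm unfolding admissible_motion_def by blast
  obtain u3 where u3: "inf_euclidean u3" "\<forall>x\<in>comp_points R3. v x = u3 x"
    using adm unfolding admissible_motion_def by blast
  obtain w1 t1 where e1: "\<And>x. u1 x = cross3 w1 x + t1" using u1(1) unfolding inf_euclidean_def by blast
  obtain w2 t2 where e2: "\<And>x. u2 x = cross3 w2 x + t2" using u2(1) unfolding inf_euclidean_def by blast
  obtain w3 t3 where e3: "\<And>x. u3 x = cross3 w3 x + t3" using u3(1) unfolding inf_euclidean_def by blast
  have q1: "u1 p1 = u2 p1"
  proof -
    have h: "p1 \<in> comp_points R1" "p1 \<in> comp_points R2" using inst_sub[OF two_inst(1) p1] by simp_all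
    show ?thesis using bspec[OF u1(2) h(1)] bspec[OF u2(2) h(2)] by simp
  qed
  have q2: "u1 p2 = u2 p2"
  proof -
    have h: "p2 \<in> comp_points R1" "p2 \<in> comp_points R2" using inst_sub[OF two_inst(2) p2] by simp_all
    show ?thesis using bspec[OF u1(2) h(1)] bspec[OF u2(2) h(2)] by simp
  qed
  have q3: "u1 p3 = u3 p3" using p3 bspec[OF u1(2), of p3] bspec[OF u3(2), of p3] by simp
  have q4: "u2 p4 = u3 p4" using p4 bspec[OF u2(2), of p4] bspec[OF u3(2), of p4] by simp
  define a where "a = w2 - w1"
  define b where "b = w3 - w1"
  have "cross3 a p1 + (t2 - t1) = 0" "cross3 a p2 + (t2 - t1) = 0"
    using q1 q2 unfolding e1 e2 a_def by (simp_all add: Cross3.left_diff_distrib algebra_simps)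
  hence ha: "cross3 a (p2 - p1) = 0" by (metis Cross3.right_diff_distrib add_right_cancel right_minus_eq)
  have "cross3 b p3 + (t3 - t1) = 0" using q3 unfolding e1 e3 b_def
    by (simp add: Cross3.left_diff_distrib algebra_simps)
  moreover have "cross3 b p4 + (t3 - t1) = cross3 a p4 + (t2 - t1)"
    using q4 unfolding e1 e2 e3 a_def b_def by (simp add: Cross3.left_diff_distrib algebra_simps)
  ultimately have hb: "cross3 b (p4 - p3) = cross3 a (p4 - p1)"
    using \<open>cross3 a p1 + (t2 - t1) = 0\<close>
  proof -
    assume x1: "cross3 b p3 + (t3 - t1) = 0" and x2: "cross3 b p4 + (t3 - t1) = cross3 a p4 + (t2 - t1)"
      and x3: "cross3 a p1 + (t2 - t1) = 0"
    have y1: "cross3 b p3 = -(t3 - t1)" by (subst eq_neg_iff_add_eq_0) (rule x1)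
    have y2: "cross3 b p4 = cross3 a p4 + (t2 - t1) - (t3 - t1)" by (subst eq_diff_eq) (rule x2)
    have y3: "cross3 a p1 = -(t2 - t1)" by (subst eq_neg_iff_add_eq_0) (rule x3)
    show ?thesis unfolding Cross3.right_diff_distrib y1 y2 y3 by (simp add: algebra_simps)
  qed
  have dz: "cross3 a (p4 - p1) \<bullet> (p4 - p3) = 0"
    using hb dot_cross_self(3)[of b "p4 - p3"] by simp
  have p12: "p1 \<noteq> p2" using ncol3 by auto
  have a0: "a = 0"
  proof (rule ccontr)
    assume an: "a \<noteq> 0"
    have "collinear {0, a, p2 - p1}" using ha cross_eq_0 by blast
    moreover have "p2 - p1 \<noteq> 0" using p12 by simp
    ultimately have "\<exists>k. p2 - p1 = k *\<^sub>R a" using an unfolding collinear_lemma by simp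
    then obtain k where k: "p2 - p1 = k *\<^sub>R a" by blast
    have "cross3 (p2 - p1) (p4 - p1) \<bullet> (p4 - p3) = k * (cross3 a (p4 - p1) \<bullet> (p4 - p3))"
      unfolding k by (simp add: cross_mult_left)
    also have "\<dots> = 0" using dz by simp
    finally show False using triple_nonzero[OF ncol4 generic] by simp
  qed
  hence w21: "w2 = w1" unfolding a_def by simp
  hence t21: "t2 = t1" using q1 unfolding e1 e2 by simp
  have hb0: "cross3 b (p4 - p3) = 0" using hb a0 by simp
  have hb3: "cross3 b p3 + (t3 - t1) = 0" using q3 unfolding e1 e3 b_def
    by (simp add: Cross3.left_diff_distrib algebra_simps)
  have p34: "p3 \<noteq> p4"
  proof
    assume "p3 = p4"
    hence "{p1, p2, p3, p4} = {p1, p2, p3}" by auto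
    thus False using generic coplanar_3 by metis
  qed
  have "card R3 = Suc 0" using isrod by simp
  then obtain r where r: "R3 = {r}" unfolding card_1_singleton_iff by blast
  have cp3: "comp_points R3 = closed_segment (fst r) (snd r)"
    unfolding r comp_points_def rod_points_def by simp
  show "\<exists>u. inf_euclidean u \<and> (\<forall>x\<in>\<Union>C\<in>{R1, R2, R3}. comp_points C. v x = u x)"
  proof (intro exI conjI ballI)
    show "inf_euclidean u1" by fact
    fix x assume "x \<in> (\<Union>C\<in>{R1, R2, R3}. comp_points C)"
    then consider "x \<in> comp_points R1" | "x \<in> comp_points R2" | "x \<in> comp_points R3" by auto
    then show "v x = u1 x"
    proof cases
      case 1 then show ?thesis using u1 by auto
    next
      case 2 then show ?thesis using u2 unfolding e1 e2 w21 t21 by auto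
    next
      case 3
      have "{p3, x, p4} \<subseteq> closed_segment (fst r) (snd r)" using 3 p3 p4 cp3 by simp
      hence "collinear {p3, x, p4}"
        by (rule collinear_subset[OF collinear_closed_segment])
      hence "p3 = p4 \<or> (\<exists>s. x = s *\<^sub>R p3 + (1 - s) *\<^sub>R p4)" by (simp only: collinear_3_expand)
      then obtain s where s: "x = s *\<^sub>R p3 + (1 - s) *\<^sub>R p4" using p34 by blast
      have "x - p3 = (1 - s) *\<^sub>R (p4 - p3)" unfolding s by (simp add: algebra_simps)
      hence "cross3 b (x - p3) = 0" using hb0 by (simp add: cross_mult_right)
      hence "cross3 b x + (t3 - t1) = 0" using hb3 by (simp add: Cross3.right_diff_distrib algebra_simps)
      then show ?thesis using u3(2) 3 unfolding e1 e3 b_def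
        by (simp add: Cross3.left_diff_distrib algebra_simps)
    qed
  qed
qed

end
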